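(* Let $j\in\mathbb{N}$ and $b,r\in\mathbb{Z}$ with $b\neq0$. Then $$\sum_{d=-\infty}^{+\infty}\frac{1}{\left(d+\frac{r}{b}-\frac{1}{2b}\right)^{j}}=\frac{(2\pi \mathrm{i})^{j}\,\mathrm{sgn}(b)}{2\,(j-1)!\,b^{1-j}}\sum_{l=0}^{|b|-1}e^{-\frac{2\pi \mathrm{i} lr}{b}+\frac{\pi \mathrm{i} l}{b}}\,\overline{E}_{j-1}\!\left(\frac{l}{b}\right).$$
   Context: $\mathrm{i}^2=-1$. Doubly infinite sums $\sum_{d=-\infty}^{+\infty}$ are interpreted as $\lim_{N\to\infty}\sum_{d=-N}^{N}$ (this matters for $j=1$). $[x]$ is the floor of $x$, $\{x\}=x-[x]$, $E_n(x)$ is the Euler polynomial ($\frac{2e^{xt}}{e^t+1}=\sum_{n\ge0}E_n(x)\frac{t^n}{n!}$). Quasi-periodic Euler functions: $\overline{E}_{0}(x)=(-1)^{[x]}$ if $x\notin\mathbb{Z}$ and $\overline{E}_0(x)=0$ if $x\in\mathbb{Z}$; $\overline{E}_{n}(x)=(-1)^{[x]}E_{n}(\{x\})$ for $n\ge1$. $\mathrm{sgn}(b)=b/|b|$. *)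

theory Defs
  imports "HOL-Analysis.Analysis" "HOL-Computational_Algebra.Formal_Power_Series"
begin

definition euler_poly :: "nat \<Rightarrow> real \<Rightarrow> real" where
  "euler_poly n x = fact n * fps_nth (fps_const 2 * fps_exp x / (fps_exp 1 + 1)) n"

definition euler_bar :: "nat \<Rightarrow> real \<Rightarrow> real" where
  "euler_bar n x =
     (if n = 0 then (if x \<in> \<int> then 0 else (-1) powi \<lfloor>x\<rfloor>)
      else (-1) powi \<lfloor>x\<rfloor> * euler_poly n (frac x))"

end

theory Submission
  imports Defs
begin

unbundle no vec_syntax
unbundle fps_syntax

lemma digamma_reflection:
  fixes z :: complex
  assumes z: "z \<notin> \<int>"
  shows "Digamma (1 - z) - Digamma z = of_real pi * cos (of_real pi * z) / sin (of_real pi * z)"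
proof -
  have z0: "z \<notin> \<int>\<^sub>\<le>\<^sub>0" using z nonpos_Ints_subset_Ints by blast
  have z1: "1 - z \<notin> \<int>\<^sub>\<le>\<^sub>0"
  proof
    assume "1 - z \<in> \<int>\<^sub>\<le>\<^sub>0"
    hence "1 - z \<in> \<int>" using nonpos_Ints_subset_Ints by blast
    hence "1 - (1 - z) \<in> \<int>" by (intro Ints_diff) auto
    with z show False by simp
  qed
  have s: "sin (of_real pi * z) \<noteq> 0"
  proof
    assume "sin (of_real pi * z) = 0"
    then obtain n :: int where "of_real pi * z = of_int n * of_real pi"
      by (auto simp: sin_eq_0)
    hence "z = of_int n" by simp
    with z show False by auto
  qed
  have d1: "((\<lambda>z. Gamma z * Gamma (1 - z)) has_field_derivative
      Gamma z * Digamma z * Gamma (1 - z) + Gamma z * (Gamma (1 - z) * Digamma (1 - z) * (-1))) (at z)"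
    using z0 z1 by (auto intro!: derivative_eq_intros)
  have d2: "((\<lambda>z. of_real pi / sin (of_real pi * z)) has_field_derivative
      - (of_real pi * (cos (of_real pi * z) * of_real pi)) / (sin (of_real pi * z))\<^sup>2) (at z)"
    using s by (auto intro!: derivative_eq_intros simp: power2_eq_square)
  have eq: "(\<lambda>z. Gamma z * Gamma (1 - z)) = (\<lambda>z::complex. of_real pi / sin (of_real pi * z))"
    by (rule ext) (rule Gamma_reflection_complex)
  from d1 d2 have "Gamma z * Digamma z * Gamma (1 - z) + Gamma z * (Gamma (1 - z) * Digamma (1 - z) * (-1))
     = - (of_real pi * (cos (of_real pi * z) * of_real pi)) / (sin (of_real pi * z))\<^sup>2"
    unfolding eq by (rule DERIV_unique)
  hence "Gamma z * Gamma (1 - z) * (Digamma z - Digamma (1 - z))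
     = - (of_real pi * (cos (of_real pi * z) * of_real pi)) / (sin (of_real pi * z))\<^sup>2"
    by (simp add: algebra_simps)
  hence "of_real pi / sin (of_real pi * z) * (Digamma z - Digamma (1 - z))
     = - (of_real pi * (cos (of_real pi * z) * of_real pi)) / (sin (of_real pi * z))\<^sup>2"
    by (simp only: Gamma_reflection_complex)
  hence h0: "of_real pi / sin (of_real pi * z) * (Digamma z - Digamma (1 - z))
     = - (of_real pi * (cos (of_real pi * z) * of_real pi)) / (sin (of_real pi * z))\<^sup>2" .
  have pi0: "(of_real pi :: complex) \<noteq> 0" by simp
  have "Digamma z - Digamma (1 - z) = (of_real pi / sin (of_real pi * z) * (Digamma z - Digamma (1 - z)))
          * (sin (of_real pi * z) / of_real pi)"
    using s pi0 by (simp add: field_simps)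
  also have "\<dots> = - (of_real pi * (cos (of_real pi * z) * of_real pi)) / (sin (of_real pi * z))\<^sup>2
          * (sin (of_real pi * z) / of_real pi)" by (simp only: h0)
  also have "\<dots> = - (of_real pi * cos (of_real pi * z) / sin (of_real pi * z))"
    using s pi0 by (simp add: field_simps power2_eq_square)
  finally show ?thesis by (simp add: algebra_simps)
qed


lemma sum_symm_split:
  fixes f :: "int \<Rightarrow> 'a::comm_monoid_add"
  shows "(\<Sum>d\<in>{- int N..int N}. f d) = (\<Sum>k<Suc N. f (int k)) + (\<Sum>k<N. f (- int k - 1))"
proof (induction N)
  case 0
  then show ?case by simp
next
  case (Suc N)
  have "{- int (Suc N)..int (Suc N)} = insert (- int N - 1) (insert (int N + 1) {- int N..int N})"
    by auto
  hence "(\<Sum>d\<in>{- int (Suc N)..int (Suc N)}. f d) = f (- int N - 1) + (f (int N + 1) + (\<Sum>d\<in>{- int N..int N}. f d))"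
    by simp
  also note Suc
  finally show ?case by (simp add: algebra_simps)
qed

lemma ln_Suc_diff_lim: "(\<lambda>N. ln (real (Suc N)) - ln (real N)) \<longlonglongrightarrow> 0"
proof -
  have "(\<lambda>n. ln (real (Suc n) / real n)) \<longlonglongrightarrow> ln 1"
  proof (rule tendsto_ln)
    have "(\<lambda>n. 1 + inverse (real n)) \<longlonglongrightarrow> 1 + 0"
      by (intro tendsto_intros lim_inverse_n)
    moreover have "eventually (\<lambda>n. 1 + inverse (real n) = real (Suc n) / real n) sequentially"
      using eventually_gt_at_top[of "0::nat"] by eventually_elim (simp add: field_simps)
    ultimately show "(\<lambda>n. real (Suc n) / real n) \<longlonglongrightarrow> 1"
      using Lim_transform_eventually by fastforce
  qed simp
  hence "(\<lambda>n. ln (real (Suc n) / real n)) \<longlonglongrightarrow> 0" by simp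
  moreover have "eventually (\<lambda>n. ln (real (Suc n) / real n) = ln (real (Suc n)) - ln (real n)) sequentially"
    using eventually_gt_at_top[of "0::nat"] by eventually_elim (simp add: ln_div)
  ultimately show ?thesis using Lim_transform_eventually by fastforce
qed

lemma lhs_limit:
  fixes x :: complex and n :: nat
  assumes x: "x \<notin> \<int>"
  shows "(\<lambda>N. \<Sum>d\<in>{- int N..int N}. 1 / (of_int d + x) ^ Suc n)
           \<longlonglongrightarrow> (Polygamma n (1 - x) - (-1)^n * Polygamma n x) / fact n"
proof -
  have x0: "x \<noteq> 0" using x by auto
  have x1: "1 - x \<noteq> 0" using x by auto
  have neg: "1 / (of_int (- int k - 1) + x) ^ Suc n = (-1) ^ Suc n * (1 / (1 - x + of_nat k) ^ Suc n)" for k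
  proof -
    have eq: "of_int (- int k - 1) + x = - (1 - x + of_nat k)" by simp
    have "(of_int (- int k - 1) + x) ^ Suc n = (- (1 - x + of_nat k)) ^ Suc n"
      by (rule arg_cong[where f="\<lambda>t. t ^ Suc n", OF eq])
    also have "\<dots> = (-1) ^ Suc n * (1 - x + of_nat k) ^ Suc n" by (rule power_minus)
    finally have "(of_int (- int k - 1) + x) ^ Suc n = (-1) ^ Suc n * (1 - x + of_nat k) ^ Suc n" .
    thus ?thesis by (cases "even n") simp_all
  qed
  have split: "(\<Sum>d\<in>{- int N..int N}. 1 / (of_int d + x) ^ Suc n) =
      (\<Sum>k<Suc N. 1 / (x + of_nat k) ^ Suc n) - (-1) ^ n * (\<Sum>k<N. 1 / (1 - x + of_nat k) ^ Suc n)" for N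
  proof -
    have e1: "(\<Sum>k<Suc N. 1 / (of_int (int k) + x) ^ Suc n) = (\<Sum>k<Suc N. 1 / (x + of_nat k) ^ Suc n)"
      by (intro sum.cong) (simp_all add: add.commute)
    have e2: "(\<Sum>k<N. (-1) ^ Suc n * (1 / (1 - x + of_nat k) ^ Suc n))
        = - ((-1) ^ n * (\<Sum>k<N. 1 / (1 - x + of_nat k) ^ Suc n))"
      by (simp add: sum_distrib_left sum_negf)
    show ?thesis unfolding sum_symm_split neg e1 e2 by simp
  qed
  show ?thesis
  proof (cases "n = 0")
    case True
    have A: "(\<lambda>N. of_real (ln (real (Suc N))) - (\<Sum>k<Suc N. inverse (x + of_nat k))) \<longlonglongrightarrow> Digamma x"
      using Digamma_LIMSEQ[OF x0] LIMSEQ_Suc by blast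
    have B: "(\<lambda>N. of_real (ln (real N)) - (\<Sum>k<N. inverse (1 - x + of_nat k))) \<longlonglongrightarrow> Digamma (1 - x)"
      using Digamma_LIMSEQ[OF x1] .
    have C: "(\<lambda>N. of_real (ln (real (Suc N)) - ln (real N)) :: complex) \<longlonglongrightarrow> of_real 0"
      by (intro tendsto_of_real ln_Suc_diff_lim)
    have "(\<lambda>N. (of_real (ln (real N)) - (\<Sum>k<N. inverse (1 - x + of_nat k)))
           - (of_real (ln (real (Suc N))) - (\<Sum>k<Suc N. inverse (x + of_nat k)))
           + of_real (ln (real (Suc N)) - ln (real N)) :: complex)
           \<longlonglongrightarrow> Digamma (1 - x) - Digamma x + of_real 0"
      by (intro tendsto_intros A B C)
    moreover have "(of_real (ln (real N)) - (\<Sum>k<N. inverse (1 - x + of_nat k)))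
           - (of_real (ln (real (Suc N))) - (\<Sum>k<Suc N. inverse (x + of_nat k)))
           + of_real (ln (real (Suc N)) - ln (real N))
         = (\<Sum>d\<in>{- int N..int N}. 1 / (of_int d + x) ^ Suc n)" for N
      unfolding split using True by (simp add: divide_inverse algebra_simps)
    ultimately show ?thesis using True by simp
  next
    case False
    hence n: "n > 0" by simp
    have A: "(\<lambda>N. \<Sum>k<Suc N. inverse ((x + of_nat k) ^ Suc n)) \<longlonglongrightarrow> (-1) ^ Suc n * Polygamma n x / fact n"
      using Polygamma_LIMSEQ[OF x0 n] LIMSEQ_Suc unfolding sums_def by blast
    have B: "(\<lambda>N. \<Sum>k<N. inverse ((1 - x + of_nat k) ^ Suc n)) \<longlonglongrightarrow> (-1) ^ Suc n * Polygamma n (1 - x) / fact n"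
      using Polygamma_LIMSEQ[OF x1 n] unfolding sums_def by blast
    have "(\<lambda>N. (\<Sum>k<Suc N. inverse ((x + of_nat k) ^ Suc n)) - (-1) ^ n * (\<Sum>k<N. inverse ((1 - x + of_nat k) ^ Suc n)))
       \<longlonglongrightarrow> (-1) ^ Suc n * Polygamma n x / fact n - (-1) ^ n * ((-1) ^ Suc n * Polygamma n (1 - x) / fact n)"
      by (intro tendsto_intros A B)
    moreover have "(-1) ^ Suc n * Polygamma n x / fact n - (-1) ^ n * ((-1) ^ Suc n * Polygamma n (1 - x) / fact n)
       = (Polygamma n (1 - x) - (-1)^n * Polygamma n x) / (fact n :: complex)"
      by (simp add: field_simps flip: power_add) 
    ultimately show ?thesis unfolding split by (simp add: divide_inverse)
  qed
qed


lemma deriv_g: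
  fixes x :: complex
  assumes x: "x \<notin> \<int>"
  shows "(deriv ^^ n) (\<lambda>t. Digamma (1 - x + t) - Digamma (x - t)) 0
           = Polygamma n (1 - x) - (-1)^n * Polygamma n x"
proof -
  define U where "U = (\<lambda>t. x - t) -` (- \<int>)"
  have U: "open U" unfolding U_def
    by (intro continuous_open_vimage open_Compl closed_Ints) (auto intro!: continuous_intros)
  have inU: "t \<in> U \<Longrightarrow> x - t \<notin> \<int>\<^sub>\<le>\<^sub>0 \<and> 1 - x + t \<notin> \<int>\<^sub>\<le>\<^sub>0" for t
  proof -
    assume "t \<in> U"
    hence t: "x - t \<notin> \<int>" by (simp add: U_def)
    have "1 - x + t \<notin> \<int>"
    proof
      assume "1 - x + t \<in> \<int>"
      hence "1 - (1 - x + t) \<in> \<int>" by (intro Ints_diff) auto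
      with t show False by (simp add: algebra_simps)
    qed
    with t show ?thesis using nonpos_Ints_subset_Ints by blast
  qed
  have "\<forall>t\<in>U. (deriv ^^ n) (\<lambda>t. Digamma (1 - x + t) - Digamma (x - t)) t
           = Polygamma n (1 - x + t) - (-1)^n * Polygamma n (x - t)"
  proof (induction n)
    case 0
    then show ?case by simp
  next
    case (Suc n)
    show ?case
    proof
      fix t assume t: "t \<in> U"
      have ev: "eventually (\<lambda>u. u \<in> U) (nhds t)" using U t by (intro eventually_nhds_in_open)
      have "(deriv ^^ Suc n) (\<lambda>t. Digamma (1 - x + t) - Digamma (x - t)) t
          = deriv ((deriv ^^ n) (\<lambda>t. Digamma (1 - x + t) - Digamma (x - t))) t" by simp
      also have "\<dots> = deriv (\<lambda>u. Polygamma n (1 - x + u) - (-1)^n * Polygamma n (x - u)) t"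
        by (intro deriv_cong_ev refl eventually_mono[OF ev]) (use Suc.IH in blast)
      also have "\<dots> = Polygamma (Suc n) (1 - x + t) - (-1)^Suc n * Polygamma (Suc n) (x - t)"
      proof (rule DERIV_imp_deriv)
        have *: "1 - x + t \<notin> \<int>\<^sub>\<le>\<^sub>0" "x - t \<notin> \<int>\<^sub>\<le>\<^sub>0" using inU[OF t] by auto
        have "((\<lambda>u. Polygamma n (1 - x + u) - (-1)^n * Polygamma n (x - u)) has_field_derivative
              Polygamma (Suc n) (1 - x + t) * (0 - 0 + 1) - (-1)^n * (Polygamma (Suc n) (x - t) * (0 - 1))) (at t)"
          by (rule derivative_eq_intros has_field_derivative_Polygamma[THEN DERIV_chain2] refl * | simp)+
        thus "((\<lambda>u. Polygamma n (1 - x + u) - (-1)^n * Polygamma n (x - u)) has_field_derivative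
              Polygamma (Suc n) (1 - x + t) - (-1)^Suc n * Polygamma (Suc n) (x - t)) (at t)"
          by simp
      qed
      finally show "(deriv ^^ Suc n) (\<lambda>t. Digamma (1 - x + t) - Digamma (x - t)) t
           = Polygamma (Suc n) (1 - x + t) - (-1)^Suc n * Polygamma (Suc n) (x - t)" .
    qed
  qed
  moreover have "0 \<in> U" using x by (simp add: U_def)
  ultimately show ?thesis by force
qed


lemma fps_coeff_scale:
  fixes y :: real and c :: complex
  shows "(fps_const 2 * fps_exp (of_real y * c) / (fps_exp c + 1)) $ n
           = c ^ n * of_real ((fps_const 2 * fps_exp y / (fps_exp 1 + 1)) $ n)"
proof -
  define Q :: "real fps" where "Q = fps_exp 1 + 1"
  define P where "P = fps_const 2 * fps_exp y / Q"
  have Q0: "Q $ 0 \<noteq> 0" by (simp add: Q_def)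
  have PQ: "P * Q = fps_const 2 * fps_exp y"
    unfolding P_def fps_divide_unit[OF Q0] using inverse_mult_eq_1[OF Q0]
    by (simp add: mult.assoc)
  define Qc :: "complex fps" where "Qc = fps_exp c + 1"
  have Qc0: "Qc $ 0 \<noteq> 0" by (simp add: Qc_def)
  define B :: "complex fps" where "B = Abs_fps (\<lambda>n. c ^ n * of_real (P $ n))"
  have BQ: "B * Qc = fps_const 2 * fps_exp (of_real y * c)"
  proof (rule fps_ext)
    fix n
    have "(B * Qc) $ n = (\<Sum>i=0..n. c ^ i * of_real (P $ i) * Qc $ (n - i))"
      by (simp add: fps_mult_nth B_def)
    also have "\<dots> = (\<Sum>i=0..n. c ^ n * of_real (P $ i * Q $ (n - i)))"
    proof (rule sum.cong)
      fix i assume i: "i \<in> {0..n}"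
      hence ci: "c ^ i * c ^ (n - i) = c ^ n" by (simp flip: power_add)
      show "c ^ i * of_real (P $ i) * Qc $ (n - i) = c ^ n * of_real (P $ i * Q $ (n - i))"
      proof (cases "i = n")
        case True
        then show ?thesis by (simp add: Qc_def Q_def)
      next
        case False
        hence "n - i \<noteq> 0" using i by auto
        hence e1: "Qc $ (n - i) = c ^ (n - i) / of_nat (fact (n - i))"
          and e2: "Q $ (n - i) = 1 / of_nat (fact (n - i))"
          by (simp_all add: Qc_def Q_def)
        show ?thesis unfolding e1 e2 by (simp add: ci[symmetric] field_simps)
      qed
    qed simp
    also have "\<dots> = c ^ n * of_real ((P * Q) $ n)"
      by (simp add: fps_mult_nth sum_distrib_left)
    also have "\<dots> = (fps_const 2 * fps_exp (of_real y * c)) $ n"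
      unfolding PQ by (simp add: power_mult_distrib)
    finally show "(B * Qc) $ n = (fps_const 2 * fps_exp (of_real y * c)) $ n" .
  qed
  have "fps_const 2 * fps_exp (of_real y * c) / (fps_exp c + 1) = B"
    unfolding Qc_def[symmetric] fps_divide_unit[OF Qc0] BQ[symmetric]
    using inverse_mult_eq_1'[OF Qc0] by (simp add: mult.assoc)
  thus ?thesis by (simp add: B_def P_def Q_def)
qed


lemma exp_2pi_int: "exp (2 * of_real pi * \<i> * of_int k) = (1::complex)"
  by (subst exp_eq_1) (auto intro!: exI[of _ k])

lemma cot_exp:
  fixes z :: complex
  assumes s: "sin z \<noteq> 0"
  shows "1 - exp (-2 * \<i> * z) \<noteq> 0"
    and "cos z / sin z = \<i> * (1 + exp (-2 * \<i> * z)) / (1 - exp (-2 * \<i> * z))"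
proof -
  define u where "u = exp (\<i> * z)"
  define v where "v = exp (- (\<i> * z))"
  have uv: "u * v = 1" by (simp add: u_def v_def flip: exp_add)
  have q: "exp (-2 * \<i> * z) = v * v" by (simp add: v_def mult.assoc flip: exp_add)
  have sz: "sin z = (u - v) / (2 * \<i>)" by (simp add: sin_exp_eq u_def v_def)
  have cz: "cos z = (u + v) / 2" by (simp add: cos_exp_eq u_def v_def)
  have uv0: "u - v \<noteq> 0" using s sz by auto
  have "1 - v * v = v * (u - v)" using uv by (simp add: algebra_simps)
  moreover have "v \<noteq> 0" by (simp add: v_def)
  ultimately have nz: "1 - v * v \<noteq> 0" using uv0 by simp
  show "1 - exp (-2 * \<i> * z) \<noteq> 0" unfolding q by (rule nz)
  have "1 + v * v = v * (u + v)" using uv by (simp add: algebra_simps)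
  have "cos z / sin z = \<i> * (u + v) / (u - v)" using uv0 by (simp add: sz cz field_simps)
  also have "\<dots> = \<i> * (v * (u + v)) / (v * (u - v))" using \<open>v \<noteq> 0\<close> by simp
  also have "\<dots> = \<i> * (1 + v * v) / (1 - v * v)" using uv by (simp add: algebra_simps)
  finally show "cos z / sin z = \<i> * (1 + exp (-2 * \<i> * z)) / (1 - exp (-2 * \<i> * z))" unfolding q .
qed


lemma cancel_aux: "(F::complex) \<noteq> 0 \<Longrightarrow> a / F * (F / D) = a / D"
  by (cases "D = 0") (simp_all add: field_simps)

lemma key_sum:
  fixes b r :: int and t :: complex
  assumes b: "b \<noteq> 0"
  defines "x \<equiv> of_int r / of_int b - 1 / (2 * of_int b) :: complex"
  defines "c \<equiv> 2 * of_real pi * \<i> * of_int b :: complex"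
  defines "q \<equiv> exp (2 * of_real pi * \<i> * (t - x))"
  assumes E: "exp (c * t) + 1 \<noteq> 0"
  and q1: "1 - q \<noteq> 0"
  shows "(\<Sum>l<nat \<bar>b\<bar>. exp (- 2 * of_real pi * \<i> * of_nat l * of_int r / of_int b + of_real pi * \<i> * of_nat l / of_int b)
            * (of_real ((-1) powi \<lfloor>real l / real_of_int b\<rfloor>)
                 * (2 * exp (of_real (frac (real l / real_of_int b)) * c * t) / (exp (c * t) + 1))
               - (if l = 0 then 1 else 0)))
         = of_int (sgn b) * (1 + q) / (1 - q)"
proof -
  define \<omega> where "\<omega> = exp (- 2 * of_real pi * \<i> * x)"
  define \<rho> where "\<rho> = exp (2 * of_real pi * \<i> * t)"
  define E where "E = exp (c * t)"
  define B where "B = nat \<bar>b\<bar>"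
  have bc: "(of_int b :: complex) \<noteq> 0" using b by simp
  have q: "q = \<omega> * \<rho>" by (simp add: q_def \<omega>_def \<rho>_def algebra_simps flip: exp_add)
  have w: "exp (- 2 * of_real pi * \<i> * of_nat l * of_int r / of_int b + of_real pi * \<i> * of_nat l / of_int b) = \<omega> ^ l" for l
  proof -
    have eq: "- 2 * of_real pi * \<i> * of_nat l * of_int r / of_int b + of_real pi * \<i> * of_nat l / of_int b
          = of_nat l * (- 2 * of_real pi * \<i> * x)"
      using bc by (simp add: x_def field_simps)
    show ?thesis unfolding eq \<omega>_def by (rule exp_of_nat_mult)
  qed
  have rl: "exp (of_real (real l / real_of_int b) * c * t) = \<rho> ^ l" for l
  proof -
    have eq: "of_real (real l / real_of_int b) * c * t = of_nat l * (2 * of_real pi * \<i> * t)"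
      using bc by (simp add: c_def field_simps)
    show ?thesis unfolding eq \<rho>_def by (rule exp_of_nat_mult)
  qed
  have Bx: "of_int b * x = of_int r - 1/2" using bc by (simp add: x_def field_simps)
  hence r_eq: "(of_int r :: complex) = of_int b * x + 1/2" by simp
  have geo: "(\<Sum>l<B. q ^ l) = (1 - q ^ B) / (1 - q)" using q1 by (simp add: sum_gp_strict)
  show ?thesis
  proof (cases "b > 0")
    case True
    have B: "of_nat B = (of_int b :: complex)" using True by (simp add: B_def)
    have "q ^ B = exp (of_nat B * (2 * of_real pi * \<i> * (t - x)))"
      by (simp add: q_def exp_of_nat_mult)
    also have "of_nat B * (2 * of_real pi * \<i> * (t - x)) = c * t + (2 * of_real pi * \<i> * of_int (- r) + of_real pi * \<i>)"
      unfolding B of_int_minus r_eq by (simp add: c_def algebra_simps)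
    also have "exp \<dots> = E * exp (2 * of_real pi * \<i> * of_int (- r)) * exp (of_real pi * \<i>)"
      by (simp only: exp_add E_def mult.assoc)
    also have "\<dots> = - E" by (simp only: exp_2pi_int exp_pi_i) simp
    finally have qB: "q ^ B = - E" .
    have "(\<Sum>l<nat \<bar>b\<bar>. exp (- 2 * of_real pi * \<i> * of_nat l * of_int r / of_int b + of_real pi * \<i> * of_nat l / of_int b)
            * (of_real ((-1) powi \<lfloor>real l / real_of_int b\<rfloor>)
                 * (2 * exp (of_real (frac (real l / real_of_int b)) * c * t) / (exp (c * t) + 1))
               - (if l = 0 then 1 else 0)))
        = (\<Sum>l<B. 2 / (E + 1) * q ^ l - (if l = 0 then 1 else 0))"
    proof (rule sum.cong)
      fix l assume "l \<in> {..<B}"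
      hence l: "real l < real_of_int b" using True by (simp add: B_def)
      have fl: "\<lfloor>real l / real_of_int b\<rfloor> = 0" using l True by (simp add: floor_eq_iff)
      have fr: "frac (real l / real_of_int b) = real l / real_of_int b" using l True by (simp add: frac_eq)
      show "exp (- 2 * of_real pi * \<i> * of_nat l * of_int r / of_int b + of_real pi * \<i> * of_nat l / of_int b)
            * (of_real ((-1) powi \<lfloor>real l / real_of_int b\<rfloor>)
                 * (2 * exp (of_real (frac (real l / real_of_int b)) * c * t) / (exp (c * t) + 1))
               - (if l = 0 then 1 else 0)) = 2 / (E + 1) * q ^ l - (if l = 0 then 1 else 0)"
        unfolding w fl fr rl q by (simp add: E_def power_mult_distrib field_simps)
    qed (simp add: B_def)
    also have "\<dots> = 2 / (E + 1) * (\<Sum>l<B. q ^ l) - 1"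
      using True by (simp add: sum_subtractf sum_distrib_left B_def)
    also have "\<dots> = 2 / (E + 1) * ((E + 1) / (1 - q)) - 1"
      unfolding geo qB by (simp add: add.commute)
    also have "\<dots> = 2 / (1 - q) - 1" by (simp only: cancel_aux[OF E[folded E_def]])
    also have "\<dots> = (1 + q) / (1 - q)" using q1 by (simp add: field_simps)
    finally show ?thesis using True by simp
  next
    case False
    hence bn: "b < 0" using b by simp
    have B: "of_nat B = - (of_int b :: complex)" using bn by (simp add: B_def)
    have "q ^ B = exp (of_nat B * (2 * of_real pi * \<i> * (t - x)))"
      by (simp add: q_def exp_of_nat_mult)
    also have "of_nat B * (2 * of_real pi * \<i> * (t - x)) = - (c * t) + (2 * of_real pi * \<i> * of_int r - of_real pi * \<i>)"
      unfolding B of_int_minus r_eq by (simp add: c_def algebra_simps)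
    also have "exp \<dots> = inverse E * exp (2 * of_real pi * \<i> * of_int r) / exp (of_real pi * \<i>)"
      by (simp only: exp_add exp_diff exp_minus E_def mult.assoc times_divide_eq_right)
    also have "\<dots> = - 1 / E" by (simp only: exp_2pi_int exp_pi_i) (simp add: field_simps)
    finally have qB: "q ^ B = - 1 / E" .
    have "(\<Sum>l<nat \<bar>b\<bar>. exp (- 2 * of_real pi * \<i> * of_nat l * of_int r / of_int b + of_real pi * \<i> * of_nat l / of_int b)
            * (of_real ((-1) powi \<lfloor>real l / real_of_int b\<rfloor>)
                 * (2 * exp (of_real (frac (real l / real_of_int b)) * c * t) / (exp (c * t) + 1))
               - (if l = 0 then 1 else 0)))
        = (\<Sum>l<B. (if l = 0 then 2 / (E + 1) - 1 else 0) - (if l = 0 then 0 else 2 * E / (E + 1) * q ^ l))"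
    proof (rule sum.cong)
      fix l assume "l \<in> {..<B}"
      hence l: "real l < - real_of_int b" using bn by (simp add: B_def)
      show "exp (- 2 * of_real pi * \<i> * of_nat l * of_int r / of_int b + of_real pi * \<i> * of_nat l / of_int b)
            * (of_real ((-1) powi \<lfloor>real l / real_of_int b\<rfloor>)
                 * (2 * exp (of_real (frac (real l / real_of_int b)) * c * t) / (exp (c * t) + 1))
               - (if l = 0 then 1 else 0))
          = (if l = 0 then 2 / (E + 1) - 1 else 0) - (if l = 0 then 0 else 2 * E / (E + 1) * q ^ l)"
      proof (cases "l = 0")
        case True
        then show ?thesis by (simp add: E_def)
      next
        case False
        have lb1: "real l / real_of_int b < 0" using False bn by (simp add: divide_pos_neg)
        have lb2: "-1 < real l / real_of_int b" using l bn by (simp add: field_simps)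
        have fl: "\<lfloor>real l / real_of_int b\<rfloor> = -1" using lb1 lb2 by (simp add: floor_eq_iff)
        have fr: "frac (real l / real_of_int b) = real l / real_of_int b + 1"
          unfolding frac_def fl by simp
        have ex: "exp (of_real (real l / real_of_int b + 1) * c * t) = E * \<rho> ^ l"
        proof -
          have eq: "of_real (real l / real_of_int b + 1) * c * t = c * t + of_real (real l / real_of_int b) * c * t"
            by (simp add: algebra_simps)
          show ?thesis by (simp only: eq exp_add rl E_def)
        qed
        show ?thesis unfolding w fl fr ex q using False by (simp add: E_def power_mult_distrib field_simps)
      qed
    qed (simp add: B_def)
    also have "\<dots> = (2 / (E + 1) - 1) - 2 * E / (E + 1) * ((\<Sum>l<B. q ^ l) - 1)"
    proof -
      have B0: "0 < B" using bn by (simp add: B_def)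
      have "(\<Sum>l<B. (if l = 0 then 0 else 2 * E / (E + 1) * q ^ l))
          = (\<Sum>l<B. 2 * E / (E + 1) * q ^ l) - (\<Sum>l<B. (if l = 0 then 2 * E / (E + 1) else 0))"
        unfolding sum_subtractf[symmetric] by (rule sum.cong) simp_all
      also have "\<dots> = 2 * E / (E + 1) * ((\<Sum>l<B. q ^ l) - 1)"
      proof -
        have "\<And>K. (\<Sum>l<B. K * q ^ l) - (\<Sum>l<B. (if l = 0 then K else 0)) = K * ((\<Sum>l<B. q ^ l) - 1)"
          using B0 by (simp add: sum_distrib_left right_diff_distrib)
        thus ?thesis by blast
      qed
      finally show ?thesis using B0 by (simp add: sum_subtractf)
    qed
    also have "\<dots> = (2 / (E + 1) - 1) - 2 * E / (E + 1) * ((E + 1) / (E * (1 - q)) - 1)"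
    proof -
      have E0: "E \<noteq> 0" by (simp add: E_def)
      have "1 - - 1 / E = (E + 1) / E" using E0 by (simp add: field_simps)
      thus ?thesis unfolding geo qB by simp
    qed
    also have "\<dots> = (2 / (E + 1) - 1) - (2 / (1 - q) - 2 * E / (E + 1))"
    proof -
      have E0: "E \<noteq> 0" by (simp add: E_def)
      have "2 * E / (E + 1) * ((E + 1) / (E * (1 - q))) = 2 / (1 - q)"
        using E0 E by (simp add: E_def)
      thus ?thesis by (simp add: right_diff_distrib)
    qed
    also have "\<dots> = 1 - 2 / (1 - q)"
    proof -
      have "2 / (E + 1) + 2 * E / (E + 1) = 2" using E by (simp add: E_def add_divide_distrib[symmetric] field_simps)
      thus ?thesis by (simp add: algebra_simps)
    qed
    also have "\<dots> = - ((1 + q) / (1 - q))" using q1 by (simp add: field_simps)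
    also have "\<dots> = of_int (sgn b) * (1 + q) / (1 - q)" using bn by (simp add: minus_divide_left)
    finally show ?thesis .
  qed
qed


lemma euler_poly_0: "euler_poly 0 y = 1"
  by (simp add: euler_poly_def fps_divide_unit)

lemma euler_poly_fps: "(fps_const 2 * fps_exp y / (fps_exp 1 + 1)) $ n = euler_poly n y / fact n"
  by (simp add: euler_poly_def)

lemma l_div_b_Ints:
  fixes b :: int and l :: nat
  assumes "l < nat \<bar>b\<bar>" "real l / real_of_int b \<in> \<int>"
  shows "l = 0"
proof -
  from assms(2) obtain m :: int where m: "real l / real_of_int b = of_int m" by (auto elim: Ints_cases)
  have b: "b \<noteq> 0" using assms(1) by auto
  hence "real l = of_int m * of_int b" using m by (simp add: field_simps)
  hence "int l = m * b" by (metis of_int_eq_iff of_int_mult of_int_of_nat_eq)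
  moreover have "int l < \<bar>b\<bar>" using assms(1) by simp
  ultimately have "\<bar>m\<bar> * \<bar>b\<bar> < \<bar>b\<bar>" by (simp add: abs_mult)
  hence "\<bar>m\<bar> < 1" using b by (simp add: mult_less_cancel_right2)
  hence "m = 0" by simp
  thus ?thesis using \<open>int l = m * b\<close> by simp
qed

lemma euler_bar_eq:
  fixes b :: int and l :: nat
  assumes "l < nat \<bar>b\<bar>"
  shows "euler_bar n (real l / real_of_int b)
     = (-1) powi \<lfloor>real l / real_of_int b\<rfloor> * euler_poly n (frac (real l / real_of_int b))
       - (if n = 0 \<and> l = 0 then 1 else 0)"
proof (cases "n = 0")
  case True
  show ?thesis
  proof (cases "l = 0")
    case True
    then show ?thesis using \<open>n = 0\<close> by (simp add: euler_bar_def euler_poly_0)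
  next
    case False
    hence "real l / real_of_int b \<notin> \<int>" using l_div_b_Ints[OF assms] by blast
    then show ?thesis using \<open>n = 0\<close> False by (simp add: euler_bar_def euler_poly_0)
  qed
next
  case False
  then show ?thesis by (simp add: euler_bar_def)
qed


theorem lemma2p5:
  fixes j :: nat and b r :: int
  assumes "j \<ge> 1" and "b \<noteq> 0"
  shows "(\<lambda>N. \<Sum>d\<in>{- int N..int N}.
            1 / (of_int d + of_int r / of_int b - 1 / (2 * of_int b)) ^ j :: complex)
         \<longlonglongrightarrow>
         (2 * of_real pi * \<i>) ^ j * of_int (sgn b)
           / (2 * fact (j - 1) * (of_int b) powi (1 - int j))
           * (\<Sum>l<nat \<bar>b\<bar>.
                exp (- 2 * of_real pi * \<i> * of_nat l * of_int r / of_int b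
                     + of_real pi * \<i> * of_nat l / of_int b)
                * of_real (euler_bar (j - 1) (real l / real_of_int b)))"
proof -
  define x :: complex where "x = of_int r / of_int b - 1 / (2 * of_int b)"
  define n where "n = j - 1"
  have j: "j = Suc n" using assms(1) by (simp add: n_def)
  have bc: "(of_int b :: complex) \<noteq> 0" using assms(2) by simp
  have x: "x \<notin> \<int>"
  proof
    assume "x \<in> \<int>"
    then obtain m :: int where "x = of_int m" by (auto elim: Ints_cases)
    hence "of_int r / of_int b - 1 / (2 * of_int b) = (of_int m :: complex)" by (simp add: x_def)
    hence "2 * of_int r - 1 = 2 * of_int b * (of_int m :: complex)" using bc by (simp add: field_simps)
    hence "(of_int (2 * r - 1) :: complex) = of_int (2 * b * m)" by simp
    hence "2 * r - 1 = 2 * (b * m)" by (simp only: of_int_eq_iff mult.assoc)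
    thus False by presburger
  qed
  define L where "L = (Polygamma n (1 - x) - (-1)^n * Polygamma n x) / fact n"
  have lhs: "(\<lambda>N. \<Sum>d\<in>{- int N..int N}.
            1 / (of_int d + of_int r / of_int b - 1 / (2 * of_int b)) ^ j :: complex) \<longlonglongrightarrow> L"
  proof -
    have eq: "of_int d + of_int r / of_int b - 1 / (2 * of_int b) = of_int d + x" for d :: int
      by (simp add: x_def)
    show ?thesis using lhs_limit[OF x, of n] unfolding j eq L_def .
  qed
  define c :: complex where "c = 2 * of_real pi * \<i> * of_int b"
  define B where "B = nat \<bar>b\<bar>"
  define \<sigma> where "\<sigma> l = ((-1::real) powi \<lfloor>real l / real_of_int b\<rfloor>)" for l :: nat
  define f where "f l = frac (real l / real_of_int b)" for l :: nat
  define w where "w l = exp (- 2 * of_real pi * \<i> * of_nat l * of_int r / of_int b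
                     + of_real pi * \<i> * of_nat l / of_int b)" for l :: nat
  define A where "A l = fps_const 2 * fps_exp (of_real (f l) * c) / (fps_exp c + 1)" for l :: nat
  define h where "h = (\<lambda>t. of_int (sgn b) * (of_real pi * \<i>) *
      (\<Sum>l<B. w l * (of_real (\<sigma> l) * (2 * exp (of_real (f l) * c * t) / (exp (c * t) + 1))
                        - (if l = 0 then 1 else 0))))"
  define H where "H = fps_const (of_int (sgn b) * (of_real pi * \<i>)) *
      (\<Sum>l<B. fps_const (w l) * (fps_const (of_real (\<sigma> l)) * A l - fps_const (if l = 0 then 1 else 0)))"
  define g where "g = (\<lambda>t. Digamma (1 - x + t) - Digamma (x - t))"
  have hH: "h has_fps_expansion H"
  proof -
    have 0: "(\<lambda>t. 2 * exp (of_real (f l) * c * t) / (exp (c * t) + 1)) has_fps_expansion A l" for l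
    proof -
      have 1: "(\<lambda>t. 2 * exp (of_real (f l) * c * t)) has_fps_expansion fps_const 2 * fps_exp (of_real (f l) * c)"
        by (intro has_fps_expansion_cmult_left has_fps_expansion_exp)
      have 2: "(\<lambda>t. exp (c * t) + 1) has_fps_expansion fps_exp c + 1"
        by (intro has_fps_expansion_add has_fps_expansion_exp has_fps_expansion_1)
      show ?thesis unfolding A_def by (rule has_fps_expansion_divide'[OF 1 2]) simp
    qed
    have 3: "(\<lambda>t. w l * (of_real (\<sigma> l) * (2 * exp (of_real (f l) * c * t) / (exp (c * t) + 1))
                        - (if l = 0 then 1 else 0)))
          has_fps_expansion fps_const (w l) * (fps_const (of_real (\<sigma> l)) * A l - fps_const (if l = 0 then 1 else 0))" for l
      by (intro has_fps_expansion_cmult_left has_fps_expansion_diff has_fps_expansion_const 0)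
    have 4: "(\<lambda>t. \<Sum>l<B. w l * (of_real (\<sigma> l) * (2 * exp (of_real (f l) * c * t) / (exp (c * t) + 1))
                        - (if l = 0 then 1 else 0)))
          has_fps_expansion (\<Sum>l<B. fps_const (w l) * (fps_const (of_real (\<sigma> l)) * A l - fps_const (if l = 0 then 1 else 0)))"
      by (rule has_fps_expansion_sum[OF 3])
    show ?thesis unfolding h_def H_def by (rule has_fps_expansion_cmult_left[OF 4])
  qed
  have ev: "eventually (\<lambda>t. h t = g t) (nhds 0)"
  proof -
    define U where "U = (\<lambda>t. x - t) -` (- \<int>)"
    have U: "open U" unfolding U_def
      by (intro continuous_open_vimage open_Compl closed_Ints) (auto intro!: continuous_intros)
    define V where "V = {t. exp (c * t) + 1 \<noteq> 0}"
    have V: "open V" unfolding V_def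
      by (intro open_Collect_neg closed_Collect_eq) (auto intro!: continuous_intros)
    have "0 \<in> U \<inter> V" using x by (simp add: U_def V_def)
    hence "eventually (\<lambda>t. t \<in> U \<inter> V) (nhds 0)" using U V by (intro eventually_nhds_in_open) auto
    then show ?thesis
    proof eventually_elim
      case (elim t)
      hence xt: "x - t \<notin> \<int>" and E: "exp (c * t) + 1 \<noteq> 0" by (auto simp: U_def V_def)
      define z where "z = of_real pi * (x - t)"
      have s: "sin z \<noteq> 0"
      proof
        assume "sin z = 0"
        then obtain k :: int where "z = of_int k * of_real pi" by (auto simp: sin_eq_0)
        hence "x - t = of_int k" by (simp add: z_def)
        with xt show False by auto
      qed
      define q where "q = exp (2 * of_real pi * \<i> * (t - x))"
      have qz: "exp (-2 * \<i> * z) = q" unfolding q_def z_def by (rule arg_cong[where f=exp]) (simp add: algebra_simps)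
      have q1: "1 - q \<noteq> 0" using cot_exp(1)[OF s] unfolding qz .
      have "g t = of_real pi * cos z / sin z"
        using digamma_reflection[OF xt] by (simp add: g_def z_def algebra_simps)
      also have "\<dots> = of_real pi * (cos z / sin z)" by simp
      also have "\<dots> = of_real pi * (\<i> * (1 + q) / (1 - q))" unfolding cot_exp(2)[OF s] qz ..
      also have "\<dots> = h t"
      proof -
        have E': "exp (2 * of_real pi * \<i> * of_int b * t) + 1 \<noteq> 0" using E by (simp add: c_def)
        have q1': "1 - exp (2 * of_real pi * \<i> * (t - (of_int r / of_int b - 1 / (2 * of_int b)))) \<noteq> 0"
          using q1 by (simp add: q_def x_def)
        have ks: "(\<Sum>l<B. w l * (of_real (\<sigma> l) * (2 * exp (of_real (f l) * c * t) / (exp (c * t) + 1))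
                        - (if l = 0 then 1 else 0))) = of_int (sgn b) * (1 + q) / (1 - q)"
          using key_sum[OF assms(2) E' q1'] unfolding B_def w_def \<sigma>_def f_def c_def q_def x_def .
        show ?thesis unfolding h_def ks using assms(2)
          by (cases "b > 0") (simp_all add: field_simps)
      qed
      finally show ?case ..
    qed
  qed
  have gH: "g has_fps_expansion H"
  proof -
    have "eventually (\<lambda>z. eval_fps H z = h z) (nhds 0)" "fps_conv_radius H > 0"
      using hH by (auto simp: has_fps_expansion_def)
    moreover have "eventually (\<lambda>z. eval_fps H z = g z) (nhds 0)"
      using eventually_conj[OF calculation(1) ev] by (rule eventually_mono) auto
    ultimately show ?thesis by (auto simp: has_fps_expansion_def)
  qed
  have Hn: "H $ n = L"
    using fps_nth_fps_expansion[OF gH, of n] deriv_g[OF x, of n] by (simp add: g_def L_def)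
  have Al: "A l $ n = c ^ n * of_real (euler_poly n (f l) / fact n)" for l
    unfolding A_def by (rule fps_coeff_scale[of "f l" c n, unfolded euler_poly_fps])
  have Hn2: "H $ n = of_int (sgn b) * (of_real pi * \<i>) * (c ^ n / fact n) *
      (\<Sum>l<B. w l * (of_real (\<sigma> l) * of_real (euler_poly n (f l)) - (if n = 0 \<and> l = 0 then 1 else 0)))"
  proof -
    have "H $ n = of_int (sgn b) * (of_real pi * \<i>) *
      (\<Sum>l<B. w l * (of_real (\<sigma> l) * (c ^ n * of_real (euler_poly n (f l) / fact n)) - (if n = 0 \<and> l = 0 then 1 else 0)))"
      by (simp add: H_def Al fps_sum_nth) (intro disjI2 sum.cong; simp)
    also have "(\<Sum>l<B. w l * (of_real (\<sigma> l) * (c ^ n * of_real (euler_poly n (f l) / fact n)) - (if n = 0 \<and> l = 0 then 1 else 0)))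
       = (c ^ n / fact n) * (\<Sum>l<B. w l * (of_real (\<sigma> l) * of_real (euler_poly n (f l)) - (if n = 0 \<and> l = 0 then 1 else 0)))"
      unfolding sum_distrib_left
      by (rule sum.cong) (auto simp: field_simps)
    finally show ?thesis by (simp add: mult.assoc)
  qed
  have rhs: "(2 * of_real pi * \<i>) ^ j * of_int (sgn b)
           / (2 * fact (j - 1) * (of_int b) powi (1 - int j))
           * (\<Sum>l<nat \<bar>b\<bar>.
                exp (- 2 * of_real pi * \<i> * of_nat l * of_int r / of_int b
                     + of_real pi * \<i> * of_nat l / of_int b)
                * of_real (euler_bar (j - 1) (real l / real_of_int b))) = H $ n"
  proof -
    have S: "(\<Sum>l<nat \<bar>b\<bar>.
                exp (- 2 * of_real pi * \<i> * of_nat l * of_int r / of_int b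
                     + of_real pi * \<i> * of_nat l / of_int b)
                * of_real (euler_bar (j - 1) (real l / real_of_int b)))
       = (\<Sum>l<B. w l * (of_real (\<sigma> l) * of_real (euler_poly n (f l)) - (if n = 0 \<and> l = 0 then 1 else 0)))"
    proof (rule sum.cong)
      fix l assume "l \<in> {..<B}"
      hence l: "l < nat \<bar>b\<bar>" by (simp add: B_def)
      show "exp (- 2 * of_real pi * \<i> * of_nat l * of_int r / of_int b
                     + of_real pi * \<i> * of_nat l / of_int b)
                * of_real (euler_bar (j - 1) (real l / real_of_int b))
           = w l * (of_real (\<sigma> l) * of_real (euler_poly n (f l)) - (if n = 0 \<and> l = 0 then 1 else 0))"
        unfolding euler_bar_eq[OF l] w_def \<sigma>_def f_def n_def[symmetric] by simp
    qed (simp add: B_def)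
    have P: "(2 * of_real pi * \<i>) ^ j * of_int (sgn b) / (2 * fact (j - 1) * (of_int b) powi (1 - int j))
         = of_int (sgn b) * (of_real pi * \<i>) * (c ^ n / fact n :: complex)"
    proof -
      have pw: "(of_int b :: complex) powi (1 - int j) = inverse (of_int b ^ n)"
        unfolding j by (simp add: power_int_minus)
      have bb: "(of_int b::complex) ^ n * of_int b powi - int n = 1"
        using bc by (simp add: power_int_def flip: power_mult_distrib)
      show ?thesis unfolding pw j c_def using bc
        by (simp add: power_mult_distrib field_simps bb)
    qed
    show ?thesis unfolding S P Hn2 ..
  qed
  show ?thesis using lhs unfolding rhs Hn .
qed

end
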